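(* Let $\mathcal{L}$ be a Tarskian, Boolean logic, $K$ a theory, $\delta$ a choice function, $\mathcal{C}\subseteq K$ a cleaving, and $\pi:\mathbb{N}\to\mathcal{C}$ a bijection. Then the composition $\delta_\pi$, defined by $\delta_\pi(\varphi):=\delta(\varphi\lor\min_\pi(\varphi))$, is a choice function.
   Context: Logic $(\mathrm{Fm},\mathrm{Cn})$: countable $\mathrm{Fm}$; Tarskian: $\mathrm{Cn}$ monotone, extensive, idempotent; Boolean: there are $\neg,\lor$ with $\mathrm{Cn}(\{\varphi\})\cap\mathrm{Cn}(\{\neg\varphi\})=\mathrm{Cn}(\emptyset)$, $\mathrm{Cn}(\{\varphi,\neg\varphi\})=\mathrm{Fm}$, and usual $\lor$-introduction/elimination relative to $\mathrm{Cn}$; $\bot$ denotes a formula with $\mathrm{Cn}(\{\bot\})=\mathrm{Fm}$. $\varphi\equiv\psi$ iff $\mathrm{Cn}(\{\varphi\})=\mathrm{Cn}(\{\psi\})$. $\mathrm{CCT}$ = complete consistent theories; $\overline{\varphi}:=\{X\in\mathrm{CCT}\mid\varphi\notin X\}$. A choice function is $\delta:\mathrm{Fm}\to\mathcal{P}(\mathrm{CCT})$ with (CF1) $\delta(\varphi)\neq\emptyset$; (CF2) if $\varphi\notin\mathrm{Cn}(\emptyset)$ then $\delta(\varphi)\subseteq\overline{\varphi}$; (CF3) $\varphi\equiv\psi$ implies $\delta(\varphi)=\delta(\psi)$. A cleaving is an infinite set $\mathcal{C}$ of formulae with, for distinct $\varphi,\psi\in\mathcal{C}$, $\varphi\not\equiv\psi$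 and $\varphi\lor\psi\in\mathrm{Cn}(\emptyset)$. $\min_\pi(\varphi):=\pi(i)$ for the least $i\in\mathbb{N}$ with $\overline{\varphi}\cap\overline{\pi(i)}\neq\emptyset$, and $\min_\pi(\varphi):=\bot$ if no such $i$ exists. *)

theory Defs
  imports Main "HOL-Library.Countable"
begin

text \<open>A logic (Fm, Cn): formulae are the elements of a countable type 'f,
  Cn :: 'f set \<Rightarrow> 'f set is the consequence operator.\<close>

definition tarskian :: "('f set \<Rightarrow> 'f set) \<Rightarrow> bool" where
  "tarskian Cn \<longleftrightarrow>
     (\<forall>A B. A \<subseteq> B \<longrightarrow> Cn A \<subseteq> Cn B) \<and>
     (\<forall>A. A \<subseteq> Cn A) \<and>
     (\<forall>A. Cn (Cn A) = Cn A)"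

definition boolean :: "('f set \<Rightarrow> 'f set) \<Rightarrow> ('f \<Rightarrow> 'f) \<Rightarrow> ('f \<Rightarrow> 'f \<Rightarrow> 'f) \<Rightarrow> bool" where
  "boolean Cn neg vee \<longleftrightarrow>
     (\<forall>\<phi>. Cn {\<phi>} \<inter> Cn {neg \<phi>} = Cn {}) \<and>
     (\<forall>\<phi>. Cn {\<phi>, neg \<phi>} = UNIV) \<and>
     (\<forall>\<phi> \<psi>. vee \<phi> \<psi> \<in> Cn {\<phi>} \<and> vee \<phi> \<psi> \<in> Cn {\<psi>}) \<and>
     (\<forall>\<Gamma> \<phi> \<psi> \<chi>. \<chi> \<in> Cn (insert \<phi> \<Gamma>) \<longrightarrow> \<chi> \<in> Cn (insert \<psi> \<Gamma>)
          \<longrightarrow> \<chi> \<in> Cn (insert (vee \<phi> \<psi>) \<Gamma>))"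

definition is_theory :: "('f set \<Rightarrow> 'f set) \<Rightarrow> 'f set \<Rightarrow> bool" where
  "is_theory Cn K \<longleftrightarrow> Cn K = K"

definition equiv_fm :: "('f set \<Rightarrow> 'f set) \<Rightarrow> 'f \<Rightarrow> 'f \<Rightarrow> bool" where
  "equiv_fm Cn \<phi> \<psi> \<longleftrightarrow> Cn {\<phi>} = Cn {\<psi>}"

definition CCT :: "('f set \<Rightarrow> 'f set) \<Rightarrow> ('f \<Rightarrow> 'f) \<Rightarrow> 'f set set" where
  "CCT Cn neg = {X. Cn X = X \<and> X \<noteq> UNIV \<and> (\<forall>\<phi>. \<phi> \<in> X \<or> neg \<phi> \<in> X)}"

definition co :: "('f set \<Rightarrow> 'f set) \<Rightarrow> ('f \<Rightarrow> 'f) \<Rightarrow> 'f \<Rightarrow> 'f set set" where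
  "co Cn neg \<phi> = {X \<in> CCT Cn neg. \<phi> \<notin> X}"

definition choice_function :: "('f set \<Rightarrow> 'f set) \<Rightarrow> ('f \<Rightarrow> 'f) \<Rightarrow> ('f \<Rightarrow> 'f set set) \<Rightarrow> bool" where
  "choice_function Cn neg \<delta> \<longleftrightarrow>
     (\<forall>\<phi>. \<delta> \<phi> \<subseteq> CCT Cn neg) \<and>
     (\<forall>\<phi>. \<delta> \<phi> \<noteq> {}) \<and>
     (\<forall>\<phi>. \<phi> \<notin> Cn {} \<longrightarrow> \<delta> \<phi> \<subseteq> co Cn neg \<phi>) \<and>
     (\<forall>\<phi> \<psi>. equiv_fm Cn \<phi> \<psi> \<longrightarrow> \<delta> \<phi> = \<delta> \<psi>)"

definition cleaving :: "('f set \<Rightarrow> 'f set) \<Rightarrow> ('f \<Rightarrow> 'f \<Rightarrow> 'f) \<Rightarrow> 'f set \<Rightarrow> bool" where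
  "cleaving Cn vee C \<longleftrightarrow> infinite C \<and>
     (\<forall>\<phi>\<in>C. \<forall>\<psi>\<in>C. \<phi> \<noteq> \<psi> \<longrightarrow> \<not> equiv_fm Cn \<phi> \<psi> \<and> vee \<phi> \<psi> \<in> Cn {})"

definition min_pi :: "('f set \<Rightarrow> 'f set) \<Rightarrow> ('f \<Rightarrow> 'f) \<Rightarrow> 'f \<Rightarrow> (nat \<Rightarrow> 'f) \<Rightarrow> 'f \<Rightarrow> 'f" where
  "min_pi Cn neg falsum \<pi> \<phi> =
     (if \<exists>i. co Cn neg \<phi> \<inter> co Cn neg (\<pi> i) \<noteq> {}
      then \<pi> (LEAST i. co Cn neg \<phi> \<inter> co Cn neg (\<pi> i) \<noteq> {})
      else falsum)"

definition comp_choice :: "('f set \<Rightarrow> 'f set) \<Rightarrow> ('f \<Rightarrow> 'f) \<Rightarrow> ('f \<Rightarrow> 'f \<Rightarrow> 'f) \<Rightarrow> 'f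
    \<Rightarrow> ('f \<Rightarrow> 'f set set) \<Rightarrow> (nat \<Rightarrow> 'f) \<Rightarrow> 'f \<Rightarrow> 'f set set" where
  "comp_choice Cn neg vee falsum \<delta> \<pi> \<phi> = \<delta> (vee \<phi> (min_pi Cn neg falsum \<pi> \<phi>))"

end

theory Submission
  imports Defs
begin

lemma cn_sub:
  assumes "tarskian Cn" "a \<in> Cn A" shows "Cn {a} \<subseteq> Cn A"
proof -
  have "Cn {a} \<subseteq> Cn (Cn A)" using assms unfolding tarskian_def by (metis empty_subsetI insert_subset)
  thus ?thesis using assms unfolding tarskian_def by metis
qed

lemma vee_elim0:
  assumes "boolean Cn neg vee" "c \<in> Cn {a}" "c \<in> Cn {b}" shows "c \<in> Cn {vee a b}"
  using assms unfolding boolean_def by blast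

lemma co_vee:
  assumes "tarskian Cn" "boolean Cn neg vee"
  shows "co Cn neg (vee a b) \<subseteq> co Cn neg a"
proof
  fix X assume X: "X \<in> co Cn neg (vee a b)"
  hence XC: "X \<in> CCT Cn neg" and nv: "vee a b \<notin> X" by (auto simp: co_def)
  have "a \<notin> X"
  proof
    assume "a \<in> X"
    hence "Cn {a} \<subseteq> Cn X" using assms(1) unfolding tarskian_def by blast
    moreover have "vee a b \<in> Cn {a}" using assms(2) unfolding boolean_def by blast
    ultimately show False using nv XC by (auto simp: CCT_def)
  qed
  thus "X \<in> co Cn neg a" using XC by (auto simp: co_def)
qed

lemma co_equiv:
  assumes "tarskian Cn" "equiv_fm Cn a b" shows "co Cn neg a = co Cn neg b"
proof -
  have "\<And>X. Cn X = X \<Longrightarrow> (a \<in> X) = (b \<in> X)"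
  proof -
    fix X assume X: "Cn X = X"
    have m: "\<And>c. c \<in> X \<Longrightarrow> Cn {c} \<subseteq> X" using cn_sub[OF assms(1)] X by metis
    have e: "\<And>c. c \<in> Cn {c}" using assms(1) unfolding tarskian_def by blast
    show "(a \<in> X) = (b \<in> X)" using m e assms(2) unfolding equiv_fm_def by blast
  qed
  thus ?thesis by (auto simp: co_def CCT_def)
qed

lemma vee_not_thm:
  assumes T: "tarskian Cn" and B: "boolean Cn neg vee" and X: "X \<in> CCT Cn neg"
    and a: "a \<notin> X" and b: "b \<notin> X"
  shows "vee a b \<notin> Cn {}"
proof
  assume v: "vee a b \<in> Cn {}"
  have XC: "Cn X = X" "X \<noteq> UNIV" "\<forall>\<phi>. \<phi> \<in> X \<or> neg \<phi> \<in> X" using X by (auto simp: CCT_def)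
  have mono: "\<And>A B. A \<subseteq> B \<Longrightarrow> Cn A \<subseteq> Cn B" using T unfolding tarskian_def by blast
  have "Cn {} \<subseteq> Cn X" using mono by blast
  hence vX: "vee a b \<in> X" using v XC by blast
  have na: "neg a \<in> X" "neg b \<in> X" using XC a b by blast+
  have ua: "Cn (insert a X) = UNIV"
    using mono[of "{a, neg a}" "insert a X"] na B unfolding boolean_def by auto
  have ub: "Cn (insert b X) = UNIV"
    using mono[of "{b, neg b}" "insert b X"] na B unfolding boolean_def by auto
  have "\<And>c. c \<in> Cn (insert (vee a b) X)" using B ua ub unfolding boolean_def by blast
  hence "\<And>c. c \<in> X" using vX XC by (simp add: insert_absorb)
  thus False using XC by blast
qed

theorem mainTheorem7:
  fixes Cn :: "'f::countable set \<Rightarrow> 'f set"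
    and neg :: "'f \<Rightarrow> 'f" and vee :: "'f \<Rightarrow> 'f \<Rightarrow> 'f" and falsum :: 'f
    and K C :: "'f set" and \<delta> :: "'f \<Rightarrow> 'f set set" and \<pi> :: "nat \<Rightarrow> 'f"
  assumes "tarskian Cn"
    and "boolean Cn neg vee"
    and "Cn {falsum} = UNIV"
    and "is_theory Cn K"
    and "choice_function Cn neg \<delta>"
    and "cleaving Cn vee C"
    and "C \<subseteq> K"
    and "bij_betw \<pi> UNIV C"
  shows "choice_function Cn neg (comp_choice Cn neg vee falsum \<delta> \<pi>)"
proof -
  note T = assms(1) and B = assms(2) and D = assms(5)
  let ?m = "min_pi Cn neg falsum \<pi>"
  have mono: "\<And>A B. A \<subseteq> B \<Longrightarrow> Cn A \<subseteq> Cn B" using T unfolding tarskian_def by blast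
  have refl: "\<And>c. c \<in> Cn {c}" using T unfolding tarskian_def by blast
  have intro1: "\<And>a b. vee a b \<in> Cn {a}" and intro2: "\<And>a b. vee a b \<in> Cn {b}"
    using B unfolding boolean_def by blast+
  have cf2: "\<delta> (vee \<phi> (?m \<phi>)) \<subseteq> co Cn neg \<phi>" if nt: "\<phi> \<notin> Cn {}" for \<phi>
  proof -
    have "vee \<phi> (?m \<phi>) \<notin> Cn {}"
    proof (cases "\<exists>i. co Cn neg \<phi> \<inter> co Cn neg (\<pi> i) \<noteq> {}")
      case True
      let ?i = "LEAST i. co Cn neg \<phi> \<inter> co Cn neg (\<pi> i) \<noteq> {}"
      have "co Cn neg \<phi> \<inter> co Cn neg (\<pi> ?i) \<noteq> {}" using True by (rule LeastI_ex)
      then obtain X where "X \<in> CCT Cn neg" "\<phi> \<notin> X" "\<pi> ?i \<notin> X" by (auto simp: co_def)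
      hence "vee \<phi> (\<pi> ?i) \<notin> Cn {}" using vee_not_thm[OF T B] by blast
      thus ?thesis using True by (simp add: min_pi_def)
    next
      case False
      hence m: "?m \<phi> = falsum" by (simp add: min_pi_def)
      have "\<phi> \<in> Cn {vee \<phi> falsum}" using vee_elim0[OF B refl[of \<phi>]] assms(3) by blast
      moreover have "vee \<phi> falsum \<in> Cn {} \<Longrightarrow> Cn {vee \<phi> falsum} \<subseteq> Cn {}"
        using cn_sub[OF T] by blast
      ultimately show ?thesis using m nt by auto
    qed
    hence "\<delta> (vee \<phi> (?m \<phi>)) \<subseteq> co Cn neg (vee \<phi> (?m \<phi>))" using D unfolding choice_function_def by blast
    thus ?thesis using co_vee[OF T B] by blast
  qed
  have cf3: "\<delta> (vee \<phi> (?m \<phi>)) = \<delta> (vee \<psi> (?m \<psi>))" if e: "equiv_fm Cn \<phi> \<psi>" for \<phi> \<psi>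
  proof -
    have "?m \<phi> = ?m \<psi>" using co_equiv[OF T e] by (simp add: min_pi_def)
    moreover have "equiv_fm Cn (vee \<phi> m) (vee \<psi> m)" for m
    proof -
      have "vee \<psi> m \<in> Cn {vee \<phi> m}"
        using vee_elim0[OF B, of "vee \<psi> m" \<phi> m] intro1 intro2 e by (auto simp: equiv_fm_def)
      moreover have "vee \<phi> m \<in> Cn {vee \<psi> m}"
      proof -
        have "vee \<phi> m \<in> Cn {\<psi>}" using intro1[of \<phi> m] e by (simp add: equiv_fm_def)
        thus ?thesis using vee_elim0[OF B, of "vee \<phi> m" \<psi> m] intro2 by blast
      qed
      ultimately show ?thesis using cn_sub[OF T] unfolding equiv_fm_def by blast
    qed
    ultimately show ?thesis using D unfolding choice_function_def by metis
  qed
  show ?thesis using D cf2 cf3 unfolding choice_function_def comp_choice_def by blast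
qed

end
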